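(* For conjunctive guarded systems of type $(A,B)$ and every LTL formula without the next operator $h(A,B_1)$: for all $n\ge1$, if some unconditionally fair initializing run of $(A,B)^{(1,n)}$ satisfies $h(A,B_1)$, then some unconditionally fair initializing run of $(A,B)^{(1,1)}$ satisfies $h(A,B_1)$.
   Context: A process template is $U=(Q_U,\mathit{init}_U,\Sigma_U,\delta_U)$ with finite states $Q_U$, initial state $\mathit{init}_U$, finite input alphabet $\Sigma_U$ and guarded transitions $\delta_U\subseteq Q_U\times\Sigma_U\times 2^{Q_A\cup Q_B}\times Q_U$; templates $A,B$ have disjoint state sets and disjoint alphabets. The system $(A,B)^{(1,n)}$ consists of one copy of $A$ and $n$ copies $B_1,\dots,B_n$ of $B$; a global state $s$ gives each process a local state, a global input $e$ gives each process an input letter, and initially all processes are in their initial states. In a conjunctive system a guard $g$ is satisfied for process $p$ in $s$ iff every process $p'\ne p$ has $s(p')\in g$, and $\mathit{init}_A,\mathit{init}_B$ belong to every guard. A local transition $(q,\sigma,g,q')$ of $p$ is enabled for $(s,e)$ if $s(p)=q$, $e(p)=\sigma$ and $g$ is satisfied for $p$ in $s$; a global step changes the state of exactly one process along an enabled transition. A path is a sequence of configurations $(s_1,e_1,p_1),(s_2,e_2,p_2),\dots$ where $p_t$ makes the step from $s_t$ to $s_{t+1}$ under $e_t$, a configuration $(s,e,\bot)$ occurs (as the last one) exactly when all processes are disabled, and $e_{t+1}(p)=e_t(p)$ for every process $p$ not moving at moment $t$. A run is a maximal path from the initial state. A run is unconditionally fair if it is infinite and every process moves infinitely often; it is initializing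 if every process that moves infinitely often visits its template's initial state infinitely often. $h(A,B_1)$ is an LTL formula without next operator over atomic propositions from $Q_A\cup\Sigma_A$ and $(Q_B\cup\Sigma_B)\times\{1\}$, interpreted on the local states and inputs of $A$ and $B_1$ along the run. *)

theory Defs
  imports Main
begin

text \<open>Guards are sets of
states of A or B; to make the state sets of A and B disjoint, a guard is a set of
elements of the sum type 'qa + 'qb (Inl for A-states, Inr for B-states).\<close>

record ('q, 's, 'g) template =
  states :: "'q set"
  init   :: 'q
  alph   :: "'s set"
  trans  :: "('q \<times> 's \<times> 'g set \<times> 'q) set"

type_synonym ('qa, 'sa, 'qb) templA = "('qa, 'sa, 'qa + 'qb) template"
type_synonym ('qb, 'sb, 'qa) templB = "('qb, 'sb, 'qa + 'qb) template"

definition guard_universe ::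
  "('qa, 'sa, 'qa + 'qb) template \<Rightarrow> ('qb, 'sb, 'qa + 'qb) template \<Rightarrow> ('qa + 'qb) set" where
  "guard_universe A B = Inl ` states A \<union> Inr ` states B"

definition template_wf :: "('q, 's, 'g) template \<Rightarrow> 'g set \<Rightarrow> bool" where
  "template_wf U G \<longleftrightarrow> finite (states U) \<and> init U \<in> states U \<and> finite (alph U) \<and>
     (\<forall>(q, \<sigma>, g, q') \<in> trans U. q \<in> states U \<and> \<sigma> \<in> alph U \<and> g \<subseteq> G \<and> q' \<in> states U)"

definition conjunctive ::
  "('qa, 'sa, 'qa + 'qb) template \<Rightarrow> ('qb, 'sb, 'qa + 'qb) template \<Rightarrow> bool" where
  "conjunctive A B \<longleftrightarrow>
     (\<forall>(q, \<sigma>, g, q') \<in> trans A. Inl (init A) \<in> g \<and> Inr (init B) \<in> g) \<and>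
     (\<forall>(q, \<sigma>, g, q') \<in> trans B. Inl (init A) \<in> g \<and> Inr (init B) \<in> g)"

datatype proc = PA | PB nat

definition procs :: "nat \<Rightarrow> proc set" where
  "procs n = insert PA (PB ` {1..n})"

text \<open>Global state: local state of A and of each B_i; global input likewise.
Only indices 1..n are meaningful.\<close>
type_synonym ('qa, 'qb) gstate = "'qa \<times> (nat \<Rightarrow> 'qb)"
type_synonym ('sa, 'sb) ginput = "'sa \<times> (nat \<Rightarrow> 'sb)"

fun guard_sat :: "nat \<Rightarrow> ('qa, 'qb) gstate \<Rightarrow> proc \<Rightarrow> ('qa + 'qb) set \<Rightarrow> bool" where
  "guard_sat n s PA g \<longleftrightarrow> (\<forall>i\<in>{1..n}. Inr (snd s i) \<in> g)"
| "guard_sat n s (PB j) g \<longleftrightarrow> Inl (fst s) \<in> g \<and> (\<forall>i\<in>{1..n}. i \<noteq> j \<longrightarrow> Inr (snd s i) \<in> g)"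

fun gstep ::
  "('qa, 'sa, 'qa + 'qb) template \<Rightarrow> ('qb, 'sb, 'qa + 'qb) template \<Rightarrow> nat \<Rightarrow>
   ('qa, 'qb) gstate \<Rightarrow> ('sa, 'sb) ginput \<Rightarrow> proc \<Rightarrow> ('qa, 'qb) gstate \<Rightarrow> bool" where
  "gstep A B n s e PA s' \<longleftrightarrow>
     (\<exists>g q'. (fst s, fst e, g, q') \<in> trans A \<and> guard_sat n s PA g \<and> s' = (q', snd s))"
| "gstep A B n s e (PB j) s' \<longleftrightarrow> j \<in> {1..n} \<and>
     (\<exists>g q'. (snd s j, snd e j, g, q') \<in> trans B \<and> guard_sat n s (PB j) g \<and>
        s' = (fst s, (snd s)(j := q')))"

definition valid_input ::
  "('qa, 'sa, 'qa + 'qb) template \<Rightarrow> ('qb, 'sb, 'qa + 'qb) template \<Rightarrow> nat \<Rightarrow>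
   ('sa, 'sb) ginput \<Rightarrow> bool" where
  "valid_input A B n e \<longleftrightarrow> fst e \<in> alph A \<and> (\<forall>i\<in>{1..n}. snd e i \<in> alph B)"

text \<open>Infinite paths are automatically maximal. (Finite
runs ending in a deadlock configuration are never unconditionally fair, so only
infinite runs are needed.)\<close>
definition inf_run ::
  "('qa, 'sa, 'qa + 'qb) template \<Rightarrow> ('qb, 'sb, 'qa + 'qb) template \<Rightarrow> nat \<Rightarrow>
   (nat \<Rightarrow> ('qa, 'qb) gstate \<times> ('sa, 'sb) ginput \<times> proc) \<Rightarrow> bool" where
  "inf_run A B n \<rho> \<longleftrightarrow>
     fst (\<rho> 0) = (init A, \<lambda>_. init B) \<and>
     (\<forall>t. valid_input A B n (fst (snd (\<rho> t)))) \<and>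
     (\<forall>t. gstep A B n (fst (\<rho> t)) (fst (snd (\<rho> t))) (snd (snd (\<rho> t))) (fst (\<rho> (Suc t)))) \<and>
     (\<forall>t. (snd (snd (\<rho> t)) \<noteq> PA \<longrightarrow> fst (fst (snd (\<rho> (Suc t)))) = fst (fst (snd (\<rho> t)))) \<and>
          (\<forall>i\<in>{1..n}. snd (snd (\<rho> t)) \<noteq> PB i \<longrightarrow>
              snd (fst (snd (\<rho> (Suc t)))) i = snd (fst (snd (\<rho> t))) i))"

definition uncond_fair :: "nat \<Rightarrow> (nat \<Rightarrow> 'gs \<times> 'ge \<times> proc) \<Rightarrow> bool" where
  "uncond_fair n \<rho> \<longleftrightarrow> (\<forall>p\<in>procs n. \<exists>\<^sub>\<infinity>t. snd (snd (\<rho> t)) = p)"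

fun at_init ::
  "('qa, 'sa, 'qa + 'qb) template \<Rightarrow> ('qb, 'sb, 'qa + 'qb) template \<Rightarrow>
   ('qa, 'qb) gstate \<Rightarrow> proc \<Rightarrow> bool" where
  "at_init A B s PA \<longleftrightarrow> fst s = init A"
| "at_init A B s (PB j) \<longleftrightarrow> snd s j = init B"

definition initializing ::
  "('qa, 'sa, 'qa + 'qb) template \<Rightarrow> ('qb, 'sb, 'qa + 'qb) template \<Rightarrow> nat \<Rightarrow>
   (nat \<Rightarrow> ('qa, 'qb) gstate \<times> ('sa, 'sb) ginput \<times> proc) \<Rightarrow> bool" where
  "initializing A B n \<rho> \<longleftrightarrow>
     (\<forall>p\<in>procs n. (\<exists>\<^sub>\<infinity>t. snd (snd (\<rho> t)) = p) \<longrightarrow> (\<exists>\<^sub>\<infinity>t. at_init A B (fst (\<rho> t)) p))"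

datatype ('qa, 'sa, 'qb, 'sb) atom = StA 'qa | InA 'sa | StB1 'qb | InB1 'sb

datatype 'ap ltlx =
    LTrue
  | Prop 'ap
  | LNot "'ap ltlx"
  | LAnd "'ap ltlx" "'ap ltlx"
  | LOr "'ap ltlx" "'ap ltlx"
  | Until "'ap ltlx" "'ap ltlx"
  | Release "'ap ltlx" "'ap ltlx"

fun atom_holds :: "('qa, 'sa, 'qb, 'sb) atom \<Rightarrow> ('qa, 'qb) gstate \<Rightarrow> ('sa, 'sb) ginput \<Rightarrow> bool" where
  "atom_holds (StA q) s e \<longleftrightarrow> fst s = q"
| "atom_holds (InA \<sigma>) s e \<longleftrightarrow> fst e = \<sigma>"
| "atom_holds (StB1 q) s e \<longleftrightarrow> snd s 1 = q"
| "atom_holds (InB1 \<sigma>) s e \<longleftrightarrow> snd e 1 = \<sigma>"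

fun ltl_holds ::
  "(nat \<Rightarrow> ('qa, 'qb) gstate \<times> ('sa, 'sb) ginput \<times> proc) \<Rightarrow> nat \<Rightarrow>
   ('qa, 'sa, 'qb, 'sb) atom ltlx \<Rightarrow> bool" where
  "ltl_holds \<rho> t LTrue = True"
| "ltl_holds \<rho> t (Prop a) = atom_holds a (fst (\<rho> t)) (fst (snd (\<rho> t)))"
| "ltl_holds \<rho> t (LNot \<phi>) = (\<not> ltl_holds \<rho> t \<phi>)"
| "ltl_holds \<rho> t (LAnd \<phi> \<psi>) = (ltl_holds \<rho> t \<phi> \<and> ltl_holds \<rho> t \<psi>)"
| "ltl_holds \<rho> t (LOr \<phi> \<psi>) = (ltl_holds \<rho> t \<phi> \<or> ltl_holds \<rho> t \<psi>)"
| "ltl_holds \<rho> t (Until \<phi> \<psi>) =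
     (\<exists>k\<ge>t. ltl_holds \<rho> k \<psi> \<and> (\<forall>j. t \<le> j \<and> j < k \<longrightarrow> ltl_holds \<rho> j \<phi>))"
| "ltl_holds \<rho> t (Release \<phi> \<psi>) =
     (\<forall>k\<ge>t. ltl_holds \<rho> k \<psi> \<or> (\<exists>j. t \<le> j \<and> j < k \<and> ltl_holds \<rho> j \<phi>))"

definition run_sat ::
  "(nat \<Rightarrow> ('qa, 'qb) gstate \<times> ('sa, 'sb) ginput \<times> proc) \<Rightarrow>
   ('qa, 'sa, 'qb, 'sb) atom ltlx \<Rightarrow> bool" where
  "run_sat \<rho> h \<longleftrightarrow> ltl_holds \<rho> 0 h"

end

theory Submission
  imports Defs "HOL-Library.Infinite_Set"
begin

definition obs :: "(('qa,'qb) gstate \<times> ('sa,'sb) ginput \<times> proc) \<Rightarrow> 'qa \<times> 'qb \<times> 'sa \<times> 'sb" where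
  "obs c = (fst (fst c), snd (fst c) 1, fst (fst (snd c)), snd (fst (snd c)) 1)"

lemma atom_obs:
  assumes "obs c = obs c'"
  shows "atom_holds a (fst c) (fst (snd c)) = atom_holds a (fst c') (fst (snd c'))"
  using assms by (cases a) (auto simp: obs_def)

lemma until_stutter:
  fixes b :: "nat \<Rightarrow> nat"
  assumes mb: "mono b" and sb: "\<And>k. \<exists>t. b t = k"
    and PP: "\<And>t. P t = P' (b t)" and QQ: "\<And>t. Q t = Q' (b t)"
  shows "(\<exists>k\<ge>t. Q k \<and> (\<forall>j. t \<le> j \<and> j < k \<longrightarrow> P j)) =
         (\<exists>k\<ge>b t. Q' k \<and> (\<forall>j. b t \<le> j \<and> j < k \<longrightarrow> P' j))"
proof
  assume "\<exists>k\<ge>t. Q k \<and> (\<forall>j. t \<le> j \<and> j < k \<longrightarrow> P j)"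
  then obtain k where k: "k \<ge> t" "Q k" "\<forall>j. t \<le> j \<and> j < k \<longrightarrow> P j" by blast
  show "\<exists>k\<ge>b t. Q' k \<and> (\<forall>j. b t \<le> j \<and> j < k \<longrightarrow> P' j)"
  proof (intro exI conjI allI impI)
    show "b t \<le> b k" using k(1) mb by (simp add: mono_def)
    show "Q' (b k)" using k(2) QQ by simp
    fix j' assume j': "b t \<le> j' \<and> j' < b k"
    show "P' j'"
    proof (cases "j' = b t")
      case True
      have "t < k"
      proof (rule ccontr)
        assume "\<not> t < k" then have "k \<le> t" by simp
        then have "b k \<le> b t" using mb by (simp add: mono_def)
        then show False using j' True by simp
      qed
      then show ?thesis using k(3) PP True by auto
    next
      case False
      obtain j where j: "b j = j'" using sb by blast
      have "t \<le> j"
      proof (rule ccontr)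
        assume "\<not> t \<le> j" then have "j \<le> t" by simp
        then have "b j \<le> b t" using mb by (simp add: mono_def)
        then show False using j' j False by simp
      qed
      moreover have "j < k"
      proof (rule ccontr)
        assume "\<not> j < k" then have "k \<le> j" by simp
        then have "b k \<le> b j" using mb by (simp add: mono_def)
        then show False using j' j by simp
      qed
      ultimately show ?thesis using k(3) PP j by auto
    qed
  qed
next
  assume "\<exists>k\<ge>b t. Q' k \<and> (\<forall>j. b t \<le> j \<and> j < k \<longrightarrow> P' j)"
  then obtain k' where k': "k' \<ge> b t" "Q' k'" "\<forall>j. b t \<le> j \<and> j < k' \<longrightarrow> P' j" by blast
  show "\<exists>k\<ge>t. Q k \<and> (\<forall>j. t \<le> j \<and> j < k \<longrightarrow> P j)"
  proof (cases "k' = b t")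
    case True
    then show ?thesis using k' QQ by auto
  next
    case False
    define k where "k = (LEAST k. b k = k')"
    have bk: "b k = k'" unfolding k_def by (rule LeastI_ex) (rule sb)
    have tk: "t \<le> k"
    proof (rule ccontr)
      assume "\<not> t \<le> k" then have "k \<le> t" by simp
      then have "b k \<le> b t" using mb by (simp add: mono_def)
      then show False using k' bk False by simp
    qed
    show ?thesis
    proof (intro exI conjI allI impI)
      show "t \<le> k" by (rule tk)
      show "Q k" using QQ bk k' by simp
      fix j assume j: "t \<le> j \<and> j < k"
      have "b j \<noteq> k'" using not_less_Least[of j "\<lambda>k. b k = k'"] j unfolding k_def by blast
      moreover have "b j \<le> b k" using j mb by (simp add: mono_def)
      moreover have "b t \<le> b j" using j mb by (simp add: mono_def)
      ultimately show "P j" using k'(3) PP bk by auto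
    qed
  qed
qed

lemma ltl_stutter:
  fixes b :: "nat \<Rightarrow> nat"
  assumes mb: "mono b" and sb: "\<And>k. \<exists>t. b t = k"
    and ob: "\<And>t. obs (\<rho> t) = obs (\<sigma> (b t))"
  shows "ltl_holds \<rho> t \<phi> = ltl_holds \<sigma> (b t) \<phi>"
proof (induction \<phi> arbitrary: t)
  case (Prop a)
  then show ?case using atom_obs[OF ob] by simp
next
  case (Until \<phi> \<psi>)
  show ?case
    using until_stutter[OF mb sb, of "\<lambda>t. ltl_holds \<rho> t \<phi>" "\<lambda>t. ltl_holds \<sigma> t \<phi>"
        "\<lambda>t. ltl_holds \<rho> t \<psi>" "\<lambda>t. ltl_holds \<sigma> t \<psi>" t] Until by simp
next
  case (Release \<phi> \<psi>)
  have "(\<exists>k\<ge>t. \<not> ltl_holds \<rho> k \<psi> \<and> (\<forall>j. t \<le> j \<and> j < k \<longrightarrow> \<not> ltl_holds \<rho> j \<phi>)) =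
        (\<exists>k\<ge>b t. \<not> ltl_holds \<sigma> k \<psi> \<and> (\<forall>j. b t \<le> j \<and> j < k \<longrightarrow> \<not> ltl_holds \<sigma> j \<phi>))"
    using until_stutter[OF mb sb, of "\<lambda>t. \<not> ltl_holds \<rho> t \<phi>" "\<lambda>t. \<not> ltl_holds \<sigma> t \<phi>"
        "\<lambda>t. \<not> ltl_holds \<rho> t \<psi>" "\<lambda>t. \<not> ltl_holds \<sigma> t \<psi>" t] Release by simp
  then show ?case by simp blast
qed auto


theorem mainTheorem12:
  fixes A :: "('qa, 'sa, 'qa + 'qb) template"
    and B :: "('qb, 'sb, 'qa + 'qb) template"
    and h :: "('qa, 'sa, 'qb, 'sb) atom ltlx"
    and n :: nat
    and \<rho> :: "nat \<Rightarrow> ('qa, 'qb) gstate \<times> ('sa, 'sb) ginput \<times> proc"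
  assumes "template_wf A (guard_universe A B)"
    and "template_wf B (guard_universe A B)"
    and "conjunctive A B"
    and "n \<ge> 1"
    and "inf_run A B n \<rho>" and "uncond_fair n \<rho>" and "initializing A B n \<rho>"
    and "run_sat \<rho> h"
  shows "\<exists>\<rho>'. inf_run A B 1 \<rho>' \<and> uncond_fair 1 \<rho>' \<and> initializing A B 1 \<rho>' \<and> run_sat \<rho>' h"
proof -
  note run = assms(5)[unfolded inf_run_def]
  have n1: "(1::nat) \<in> {1..n}" using assms(4) by simp
  define p where "p t = snd (snd (\<rho> t))" for t
  define s where "s t = fst (\<rho> t)" for t
  define e where "e t = fst (snd (\<rho> t))" for t
  define M where "M = {t. p t = PA \<or> p t = PB 1}"
  have fairA: "\<exists>\<^sub>\<infinity>t. p t = PA" using assms(6) unfolding uncond_fair_def procs_def p_def by simp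
  have fairB: "\<exists>\<^sub>\<infinity>t. p t = PB 1" using assms(6) n1 unfolding uncond_fair_def procs_def p_def by simp
  have infM: "infinite M"
  proof -
    have "{t. p t = PA} \<subseteq> M" unfolding M_def by auto
    moreover have "infinite {t. p t = PA}" using fairA by (simp add: frequently_cofinite)
    ultimately show ?thesis using infinite_super by blast
  qed
  define \<tau> where "\<tau> = enumerate M"
  have \<tau>M: "\<tau> k \<in> M" for k unfolding \<tau>_def using infM by (simp add: enumerate_in_set)
  have \<tau>lt: "\<tau> k < \<tau> k' \<longleftrightarrow> k < k'" for k k' unfolding \<tau>_def using infM by simp
  have \<tau>le: "\<tau> k \<le> \<tau> k' \<longleftrightarrow> k \<le> k'" for k k' unfolding \<tau>_def using infM by simp
  have \<tau>ge: "k \<le> \<tau> k" for k unfolding \<tau>_def using infM by (simp add: le_enumerate)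
  have \<tau>ex: "u \<in> M \<Longrightarrow> \<exists>k. \<tau> k = u" for u unfolding \<tau>_def using infM by (simp add: enumerate_Ex)
  define b where "b t = (LEAST k. t \<le> \<tau> k)" for t
  have bge: "t \<le> \<tau> (b t)" for t unfolding b_def by (rule LeastI_ex) (use \<tau>ge in blast)
  have bmin: "t \<le> \<tau> k \<Longrightarrow> b t \<le> k" for t k unfolding b_def by (rule Least_le)
  have mb: "mono b" unfolding mono_def using bge bmin order_trans by blast
  have b\<tau>: "b (\<tau> k) = k" for k
    using bmin[of "\<tau> k" k] bge[of "\<tau> k"] \<tau>le by (meson le_antisym order_refl)
  have b\<tau>S: "b (Suc (\<tau> k)) = Suc k" for k
  proof -
    have "Suc (\<tau> k) \<le> \<tau> (Suc k)" using \<tau>lt[of k "Suc k"] by simp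
    then have "b (Suc (\<tau> k)) \<le> Suc k" by (rule bmin)
    moreover have "k < b (Suc (\<tau> k))"
      using bge[of "Suc (\<tau> k)"] \<tau>lt[of k "b (Suc (\<tau> k))"] by simp
    ultimately show ?thesis by simp
  qed
  have sb: "\<exists>t. b t = k" for k using b\<tau> by blast
  have gap: "u \<notin> M" if "t \<le> u" "u < \<tau> (b t)" for t u
  proof
    assume "u \<in> M"
    then obtain i where i: "\<tau> i = u" using \<tau>ex by blast
    then have "\<tau> i < \<tau> (b t)" using that by simp
    then have "i < b t" using \<tau>lt by blast
    moreover have "b t \<le> i" using bmin[of t i] that i by simp
    ultimately show False by simp
  qed
  have stepobs: "obs (\<rho> (Suc u)) = obs (\<rho> u)" if "u \<notin> M" for u
  proof -
    have pA: "p u \<noteq> PA" and pB: "p u \<noteq> PB 1" using that unfolding M_def by auto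
    have g: "gstep A B n (s u) (e u) (p u) (s (Suc u))" using run unfolding s_def e_def p_def by blast
    have "fst (s (Suc u)) = fst (s u) \<and> snd (s (Suc u)) 1 = snd (s u) 1"
    proof (cases "p u")
      case PA then show ?thesis using pA by simp
    next
      case (PB j) then have "j \<noteq> 1" using pB by simp
      then show ?thesis using g PB by auto
    qed
    moreover have "fst (e (Suc u)) = fst (e u)" "snd (e (Suc u)) 1 = snd (e u) 1"
      using run pA pB n1 unfolding e_def p_def by blast+
    ultimately show ?thesis unfolding obs_def s_def e_def by simp
  qed
  have constobs: "obs (\<rho> (t + d)) = obs (\<rho> t)" if "t + d \<le> \<tau> (b t)" for t d
    using that
  proof (induction d)
    case 0 then show ?case by simp
  next
    case (Suc d)
    then have "obs (\<rho> (t + d)) = obs (\<rho> t)" by simp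
    moreover have "t + d \<notin> M" using gap[of t "t + d"] Suc.prems by simp
    ultimately show ?case using stepobs by simp
  qed
  have obs\<tau>: "obs (\<rho> (\<tau> (b t))) = obs (\<rho> t)" for t
    using constobs[of t "\<tau> (b t) - t"] bge[of t] by simp
  define proj :: "('qa, 'qb) gstate \<Rightarrow> ('qa, 'qb) gstate" where
    "proj x = (fst x, \<lambda>i. if i = 1 then snd x 1 else init B)" for x
  define \<sigma> where "\<sigma> k = (proj (s (\<tau> k)), e (\<tau> k), p (\<tau> k))" for k
  have obs\<sigma>: "obs (\<sigma> k) = obs (\<rho> (\<tau> k))" for k
    unfolding obs_def \<sigma>_def proj_def s_def e_def by simp
  have ob: "obs (\<rho> t) = obs (\<sigma> (b t))" for t using obs\<sigma> obs\<tau> by simp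
  have projobs: "obs (\<rho> t) = obs (\<rho> t') \<Longrightarrow> proj (s t) = proj (s t')" for t t'
    unfolding obs_def proj_def s_def by auto
  have eobs: "obs (\<rho> t) = obs (\<rho> t') \<Longrightarrow> fst (e t) = fst (e t') \<and> snd (e t) 1 = snd (e t') 1" for t t'
    unfolding obs_def e_def by auto
  have next_eq: "obs (\<rho> (\<tau> (Suc k))) = obs (\<rho> (Suc (\<tau> k)))" for k
    using obs\<tau>[of "Suc (\<tau> k)"] b\<tau>S by simp
  have r1: "fst (\<sigma> 0) = (init A, \<lambda>_. init B)"
  proof -
    have "b 0 = 0" using bmin[of 0 0] by simp
    then have "proj (s (\<tau> 0)) = proj (s 0)" using projobs[OF obs\<tau>[of 0]] by simp
    moreover have "s 0 = (init A, \<lambda>_. init B)" using run unfolding s_def by blast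
    ultimately show ?thesis unfolding \<sigma>_def proj_def by auto
  qed
  have r2: "valid_input A B 1 (fst (snd (\<sigma> k)))" for k
  proof -
    have "valid_input A B n (e (\<tau> k))" using run unfolding e_def by blast
    then show ?thesis using n1 unfolding valid_input_def \<sigma>_def by simp
  qed
  have r3: "gstep A B 1 (fst (\<sigma> k)) (fst (snd (\<sigma> k))) (snd (snd (\<sigma> k))) (fst (\<sigma> (Suc k)))" for k
  proof -
    let ?t = "\<tau> k"
    have g: "gstep A B n (s ?t) (e ?t) (p ?t) (s (Suc ?t))" using run unfolding s_def e_def p_def by blast
    have nxt: "proj (s (\<tau> (Suc k))) = proj (s (Suc ?t))" using projobs next_eq by blast
    have pm: "p ?t = PA \<or> p ?t = PB 1" using \<tau>M[of k] unfolding M_def by simp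
    show ?thesis
    proof (cases "p ?t = PA")
      case True
      then obtain g q' where gq: "(fst (s ?t), fst (e ?t), g, q') \<in> trans A"
        "guard_sat n (s ?t) PA g" "s (Suc ?t) = (q', snd (s ?t))" using g by auto
      have "guard_sat 1 (proj (s ?t)) PA g" using gq(2) n1 unfolding proj_def by auto
      moreover have "proj (s (Suc ?t)) = (q', snd (proj (s ?t)))"
      proof -
        have e1: "snd (s (Suc ?t)) = snd (s ?t)" "fst (s (Suc ?t)) = q'" using gq(3) by simp_all
        show ?thesis unfolding proj_def e1 by simp
      qed
      ultimately show ?thesis using gq(1) True nxt unfolding \<sigma>_def proj_def by auto
    next
      case False
      then have P1: "p ?t = PB 1" using pm by simp
      then obtain g q' where gq: "(snd (s ?t) 1, snd (e ?t) 1, g, q') \<in> trans B"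
        "guard_sat n (s ?t) (PB 1) g" "s (Suc ?t) = (fst (s ?t), (snd (s ?t))(1 := q'))" using g by auto
      have "guard_sat 1 (proj (s ?t)) (PB 1) g" using gq(2) unfolding proj_def by auto
      moreover have "proj (s (Suc ?t)) = (fst (proj (s ?t)), (snd (proj (s ?t)))(1 := q'))"
        using gq(3) unfolding proj_def by auto
      ultimately show ?thesis using gq(1) P1 nxt unfolding \<sigma>_def proj_def by auto
    qed
  qed
  have r4: "(snd (snd (\<sigma> k)) \<noteq> PA \<longrightarrow> fst (fst (snd (\<sigma> (Suc k)))) = fst (fst (snd (\<sigma> k)))) \<and>
          (\<forall>i\<in>{1..1}. snd (snd (\<sigma> k)) \<noteq> PB i \<longrightarrow>
              snd (fst (snd (\<sigma> (Suc k)))) i = snd (fst (snd (\<sigma> k))) i)" for k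
  proof -
    let ?t = "\<tau> k"
    have ee: "fst (e (\<tau> (Suc k))) = fst (e (Suc ?t)) \<and> snd (e (\<tau> (Suc k))) 1 = snd (e (Suc ?t)) 1"
      using eobs next_eq by blast
    have "p ?t \<noteq> PA \<longrightarrow> fst (e (Suc ?t)) = fst (e ?t)"
         "p ?t \<noteq> PB 1 \<longrightarrow> snd (e (Suc ?t)) 1 = snd (e ?t) 1"
      using run n1 unfolding e_def p_def by blast+
    then show ?thesis using ee unfolding \<sigma>_def by auto
  qed
  have IR: "inf_run A B 1 \<sigma>" unfolding inf_run_def using r1 r2 r3 r4 by blast
  have inf\<tau>: "\<exists>\<^sub>\<infinity>k. P (p (\<tau> k))" if H1: "\<exists>\<^sub>\<infinity>t. P (p t)" and H2: "\<And>t. P (p t) \<Longrightarrow> t \<in> M" for P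
    unfolding INFM_nat
  proof
    fix m
    obtain t where t: "t > \<tau> m" "P (p t)" using H1 unfolding INFM_nat by blast
    obtain k where k: "\<tau> k = t" using \<tau>ex H2 t(2) by blast
    then show "\<exists>k>m. P (p (\<tau> k))" using t \<tau>lt by blast
  qed
  have UF: "uncond_fair 1 \<sigma>"
  proof -
    have "\<exists>\<^sub>\<infinity>k. p (\<tau> k) = PA" using inf\<tau>[of "\<lambda>x. x = PA"] fairA unfolding M_def by simp
    moreover have "\<exists>\<^sub>\<infinity>k. p (\<tau> k) = PB 1" using inf\<tau>[of "\<lambda>x. x = PB 1"] fairB unfolding M_def by simp
    ultimately show ?thesis unfolding uncond_fair_def procs_def \<sigma>_def by simp
  qed
  have infb: "\<exists>\<^sub>\<infinity>k. Q (obs (\<sigma> k))" if H3: "\<exists>\<^sub>\<infinity>t. Q (obs (\<rho> t))" for Q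
    unfolding INFM_nat
  proof
    fix m
    obtain t where t: "t > \<tau> m" "Q (obs (\<rho> t))" using H3 unfolding INFM_nat by blast
    have "b (Suc (\<tau> m)) \<le> b t" using t(1) mb by (simp add: mono_def)
    then have "b t > m" using b\<tau>S by simp
    then show "\<exists>k>m. Q (obs (\<sigma> k))" using t(2) ob by metis
  qed
  have atA: "at_init A B (fst c) PA = (fst (obs c) = init A)" for c :: "('qa, 'qb) gstate \<times> ('sa, 'sb) ginput \<times> proc"
    unfolding obs_def by simp
  have atB: "at_init A B (fst c) (PB 1) = (fst (snd (obs c)) = init B)" for c :: "('qa, 'qb) gstate \<times> ('sa, 'sb) ginput \<times> proc"
    unfolding obs_def by simp
  have IN: "initializing A B 1 \<sigma>"
  proof -
    have iA: "\<exists>\<^sub>\<infinity>t. at_init A B (fst (\<rho> t)) PA" using assms(7) fairA unfolding initializing_def procs_def p_def by simp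
    have iB: "\<exists>\<^sub>\<infinity>t. at_init A B (fst (\<rho> t)) (PB 1)" using assms(7) fairB n1 unfolding initializing_def procs_def p_def by simp
    have "\<exists>\<^sub>\<infinity>k. at_init A B (fst (\<sigma> k)) PA"
      using infb[of "\<lambda>x. fst x = init A"] iA unfolding atA by simp
    moreover have "\<exists>\<^sub>\<infinity>k. at_init A B (fst (\<sigma> k)) (PB 1)"
      using infb[of "\<lambda>x. fst (snd x) = init B"] iB unfolding atB by simp
    ultimately show ?thesis unfolding initializing_def procs_def by simp
  qed
  have RS: "run_sat \<sigma> h"
  proof -
    have "b 0 = 0" using bmin[of 0 0] by simp
    then show ?thesis using ltl_stutter[of b \<rho> \<sigma> 0 h, OF mb sb ob] assms(8) unfolding run_sat_def by simp
  qed
  show ?thesis using IR UF IN RS by blast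
qed

end
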